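(* In the standing setting, let $\lambda>0$ and suppose that $\dim\operatorname{span}\{\varphi\in D(\mathcal N_\lambda):(\mathcal N_\lambda^\circ\varphi,\varphi)_K=0\}=\infty$. Then $\sigma(\mathcal N_\lambda)\cap(-\infty,0)\neq\emptyset$.
   Context: Standing setting: $V,H,K$ complex Hilbert spaces, $V$ embedded in $H$ with compact inclusion $i\colon V\to H$, $j\colon V\to K$ compact linear, $\mathfrak a$ a positive, symmetric, continuous sesquilinear form on $V$ which is $i$-elliptic ($\mathfrak a(u,u)+\omega\|u\|_H^2\ge\delta\|u\|_V^2$ for some $\omega,\delta>0$). $\mathfrak b_\lambda(u,v)=\mathfrak a(u,v)-\lambda(u,v)_H$, and $\mathcal N_\lambda=\{(j(u),\psi)\in K\times K: u\in V,\ \mathfrak b_\lambda(u,v)=(\psi,j(v))_K\ \forall v\in V\}$, which is a self-adjoint graph in $K$ with compact resolvent. $D(\mathcal N_\lambda)$ is the set of first coordinates; the single-valued part $\mathcal N_\lambda^\circ$ is the self-adjoint operator in $\overline{D(\mathcal N_\lambda)}$ (closure in $K$) with graph $\mathcal N_\lambda\cap(\overline{D(\mathcal N_\lambda)}\times\overline{D(\mathcal N_\lambda)})$, and $\sigma(\mathcal N_\lambda):=\sigma(\mathcal N_\lambda^\circ)$. *)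

theory Defs
  imports "HOL-Analysis.Analysis"
begin

class complex_vector = real_vector +
  fixes scaleC :: "complex \<Rightarrow> 'a \<Rightarrow> 'a" (infixr \<open>*\<^sub>C\<close> 75)
  assumes scaleC_add_right: "a *\<^sub>C (x + y) = a *\<^sub>C x + a *\<^sub>C y"
    and scaleC_add_left: "(a + b) *\<^sub>C x = a *\<^sub>C x + b *\<^sub>C x"
    and scaleC_scaleC: "a *\<^sub>C (b *\<^sub>C x) = (a * b) *\<^sub>C x"
    and scaleC_one: "1 *\<^sub>C x = x"
    and scaleC_of_real: "(complex_of_real r) *\<^sub>C x = r *\<^sub>R x"

text \<open>Inner product: linear in the first argument, conjugate-linear in the second.\<close>
class complex_inner = complex_vector + real_normed_vector +
  fixes cinner :: "'a \<Rightarrow> 'a \<Rightarrow> complex"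
  assumes cinner_cnj_commute: "cinner x y = cnj (cinner y x)"
    and cinner_add_left: "cinner (x + y) z = cinner x z + cinner y z"
    and cinner_scaleC_left: "cinner (a *\<^sub>C x) y = a * cinner x y"
    and cinner_Re_ge_zero: "0 \<le> Re (cinner x x)"
    and cinner_eq_zero_iff: "cinner x x = 0 \<longleftrightarrow> x = 0"
    and norm_eq_sqrt_cinner: "norm x = sqrt (Re (cinner x x))"

class chilbert_space = complex_inner + complete_space

definition clinear :: "('a::complex_vector \<Rightarrow> 'b::complex_vector) \<Rightarrow> bool" where
  "clinear f \<longleftrightarrow> (\<forall>x y. f (x + y) = f x + f y) \<and> (\<forall>c x. f (c *\<^sub>C x) = c *\<^sub>C f x)"

definition compact_op :: "('a::complex_inner \<Rightarrow> 'b::complex_inner) \<Rightarrow> bool" where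
  "compact_op f \<longleftrightarrow> clinear f \<and> compact (closure (f ` {x. norm x \<le> 1}))"

definition cspan :: "'a::complex_vector set \<Rightarrow> 'a set" where
  "cspan S = {x. \<exists>B c. finite B \<and> B \<subseteq> S \<and> x = (\<Sum>b\<in>B. c b *\<^sub>C b)}"

definition infinite_cdim :: "'a::complex_vector set \<Rightarrow> bool" where
  "infinite_cdim S \<longleftrightarrow> \<not> (\<exists>B. finite B \<and> cspan S \<subseteq> cspan B)"

definition sesquilinear :: "('a::complex_vector \<Rightarrow> 'a \<Rightarrow> complex) \<Rightarrow> bool" where
  "sesquilinear a \<longleftrightarrow>
     (\<forall>u w v. a (u + w) v = a u v + a w v) \<and> (\<forall>c u v. a (c *\<^sub>C u) v = c * a u v) \<and>
     (\<forall>u v w. a u (v + w) = a u v + a u w) \<and> (\<forall>c u v. a u (c *\<^sub>C v) = cnj c * a u v)"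

definition symmetric_form :: "('a \<Rightarrow> 'a \<Rightarrow> complex) \<Rightarrow> bool" where
  "symmetric_form a \<longleftrightarrow> (\<forall>u v. a u v = cnj (a v u))"

definition positive_form :: "('a \<Rightarrow> 'a \<Rightarrow> complex) \<Rightarrow> bool" where
  "positive_form a \<longleftrightarrow> (\<forall>u. 0 \<le> Re (a u u) \<and> Im (a u u) = 0)"

definition bounded_form :: "('a::real_normed_vector \<Rightarrow> 'a \<Rightarrow> complex) \<Rightarrow> bool" where
  "bounded_form a \<longleftrightarrow> (\<exists>C. \<forall>u v. cmod (a u v) \<le> C * norm u * norm v)"

definition elliptic_form ::
  "('v::real_normed_vector \<Rightarrow> 'v \<Rightarrow> complex) \<Rightarrow> ('v \<Rightarrow> 'h::real_normed_vector) \<Rightarrow> bool" where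
  "elliptic_form a i \<longleftrightarrow> (\<exists>\<omega> \<delta>. \<omega> > 0 \<and> \<delta> > 0 \<and>
      (\<forall>u. Re (a u u) + \<omega> * (norm (i u))\<^sup>2 \<ge> \<delta> * (norm u)\<^sup>2))"

definition Ngraph ::
  "('v::complex_inner \<Rightarrow> 'v \<Rightarrow> complex) \<Rightarrow> ('v \<Rightarrow> 'h::complex_inner) \<Rightarrow> ('v \<Rightarrow> 'k::complex_inner)
    \<Rightarrow> real \<Rightarrow> ('k \<times> 'k) set" where
  "Ngraph a i j lam = {(j u, \<psi>) | u \<psi>.
      \<forall>v. a u v - complex_of_real lam * cinner (i u) (i v) = cinner \<psi> (j v)}"

definition graph_dom :: "('k \<times> 'k) set \<Rightarrow> 'k set" where
  "graph_dom N = fst ` N"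

text \<open>Single-valued (operator) part: the graph intersected with
  \<open>closure (D N) \<times> closure (D N)\<close>.\<close>
definition op_part :: "('k::topological_space \<times> 'k) set \<Rightarrow> ('k \<times> 'k) set" where
  "op_part N = N \<inter> (closure (graph_dom N) \<times> closure (graph_dom N))"

definition op_resolvent_set :: "'k::complex_inner set \<Rightarrow> ('k \<times> 'k) set \<Rightarrow> complex set" where
  "op_resolvent_set M A = {\<mu>.
      (\<forall>f\<in>M. \<exists>x y. (x, y) \<in> A \<and> y - \<mu> *\<^sub>C x = f) \<and>
      (\<exists>C. \<forall>(x, y)\<in>A. norm x \<le> C * norm (y - \<mu> *\<^sub>C x))}"

definition op_spectrum :: "'k::complex_inner set \<Rightarrow> ('k \<times> 'k) set \<Rightarrow> complex set" where
  "op_spectrum M A = UNIV - op_resolvent_set M A"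

text \<open>\<open>\<sigma>(\<N>) := \<sigma>(\<N>\<degree>)\<close>, the operator part acting in \<open>closure (D \<N>)\<close>.\<close>
definition graph_spectrum :: "('k::complex_inner \<times> 'k) set \<Rightarrow> complex set" where
  "graph_spectrum N = op_spectrum (closure (graph_dom N)) (op_part N)"

end

theory Submission
  imports Defs
begin


lemma scaleC_zero_left[simp]: "0 *\<^sub>C x = (0::'a::complex_vector)"
  using scaleC_of_real[of 0 x] by simp
lemma scaleC_zero_right[simp]: "c *\<^sub>C (0::'a::complex_vector) = 0"
  using scaleC_add_right[of c 0 0] by simp
lemma scaleC_diff_right: "c *\<^sub>C (x - y) = c *\<^sub>C x - c *\<^sub>C (y::'a::complex_vector)"
  using scaleC_add_right[of c "x - y" y] by (simp add: eq_diff_eq)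
lemma scaleC_minus_right: "c *\<^sub>C (- x) = - (c *\<^sub>C (x::'a::complex_vector))"
  using scaleC_diff_right[of c 0 x] by simp
lemma scaleC_diff_left: "(c - d) *\<^sub>C x = c *\<^sub>C x - d *\<^sub>C (x::'a::complex_vector)"
  using scaleC_add_left[of "c - d" d x] by (simp add: eq_diff_eq)
lemma scaleC_minus_left: "(- c) *\<^sub>C x = - (c *\<^sub>C (x::'a::complex_vector))"
  using scaleC_diff_left[of 0 c x] by simp
lemma scaleC_scaleR: "c *\<^sub>C (r *\<^sub>R x) = r *\<^sub>R (c *\<^sub>C (x::'a::complex_vector))"
  by (simp add: scaleC_of_real[symmetric] scaleC_scaleC mult.commute)

lemma cinner_add_right: "cinner x (y + z) = cinner x y + cinner (x::'a::complex_inner) z"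
proof -
  have "cinner x (y + z) = cnj (cinner (y + z) x)" by (rule cinner_cnj_commute)
  also have "\<dots> = cnj (cinner y x) + cnj (cinner z x)" by (simp add: cinner_add_left)
  also have "\<dots> = cinner x y + cinner x z"
    by (simp add: cinner_cnj_commute[of x y] cinner_cnj_commute[of x z])
  finally show ?thesis .
qed
lemma cinner_scaleC_right: "cinner x (c *\<^sub>C y) = cnj c * cinner (x::'a::complex_inner) y"
proof -
  have "cinner x (c *\<^sub>C y) = cnj (cinner (c *\<^sub>C y) x)" by (rule cinner_cnj_commute)
  also have "\<dots> = cnj c * cnj (cinner y x)" by (simp add: cinner_scaleC_left)
  also have "\<dots> = cnj c * cinner x y"
    by (simp add: cinner_cnj_commute[of x y])
  finally show ?thesis .
qed
lemma cinner_scaleR_left: "cinner (r *\<^sub>R x) y = of_real r * cinner (x::'a::complex_inner) y"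
  by (simp add: scaleC_of_real[symmetric] cinner_scaleC_left)
lemma cinner_scaleR_right: "cinner x (r *\<^sub>R y) = of_real r * cinner (x::'a::complex_inner) y"
  by (simp add: scaleC_of_real[symmetric] cinner_scaleC_right)
lemma cinner_zero_left[simp]: "cinner 0 (x::'a::complex_inner) = 0"
  using cinner_add_left[of 0 0 x] by simp
lemma cinner_zero_right[simp]: "cinner (x::'a::complex_inner) 0 = 0"
  using cinner_add_right[of x 0 0] by simp
lemma cinner_diff_left: "cinner (x - y) z = cinner x z - cinner (y::'a::complex_inner) z"
  using cinner_add_left[of "x - y" y z] by (simp add: eq_diff_eq)
lemma cinner_diff_right: "cinner x (y - z) = cinner x y - cinner (x::'a::complex_inner) z"
  using cinner_add_right[of x "y - z" z] by (simp add: eq_diff_eq)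
lemma cinner_minus_left: "cinner (- x) y = - cinner (x::'a::complex_inner) y"
  using cinner_diff_left[of 0 x y] by simp
lemma cinner_minus_right: "cinner x (- y) = - cinner (x::'a::complex_inner) y"
  using cinner_diff_right[of x 0 y] by simp

lemma cinner_self_Im: "Im (cinner x (x::'a::complex_inner)) = 0"
proof -
  have "Im (cinner x x) = Im (cnj (cinner x x))" using cinner_cnj_commute[of x x] by simp
  thus ?thesis by simp
qed
lemma norm_sq_cinner: "(norm x)^2 = Re (cinner x (x::'a::complex_inner))"
  using norm_eq_sqrt_cinner[of x] cinner_Re_ge_zero[of x] by simp
lemma cinner_self_norm: "cinner x x = complex_of_real ((norm (x::'a::complex_inner))^2)"
  using cinner_self_Im[of x] norm_sq_cinner[of x] by (simp add: complex_eq_iff)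
lemma Re_cinner_swap: "Re (cinner y x) = Re (cinner x (y::'a::complex_inner))"
  using cinner_cnj_commute[of y x] by simp



lemma norm_scaleC: "norm (c *\<^sub>C x) = cmod c * norm (x::'a::complex_inner)"
proof -
  have cc: "c * cnj c = complex_of_real ((cmod c)^2)" by (rule complex_norm_square[symmetric])
  have "cinner (c *\<^sub>C x) (c *\<^sub>C x) = (c * cnj c) * cinner x x"
    by (simp add: cinner_scaleC_left cinner_scaleC_right)
  also have "\<dots> = complex_of_real ((cmod c)^2 * (norm x)^2)"
    unfolding cc cinner_self_norm[of x] by simp
  finally have "(norm (c *\<^sub>C x))^2 = (cmod c * norm x)^2"
    unfolding norm_sq_cinner[of "c *\<^sub>C x"] by (simp add: power_mult_distrib)
  thus ?thesis
    by (simp add: power2_eq_iff_nonneg)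
qed

lemma cauchy_schwarz: "cmod (cinner x y) \<le> norm x * norm (y::'a::complex_inner)"
proof (cases "y = 0")
  case True then show ?thesis by simp
next
  case False
  define Y where "Y = (norm y)^2"
  define c where "c = cinner x y"
  have Yp: "Y > 0" using False by (simp add: Y_def)
  define w where "w = complex_of_real Y *\<^sub>C x - c *\<^sub>C y"
  have cyx: "cinner y x = cnj c" by (simp add: c_def cinner_cnj_commute[of y x])
  have cyy: "cinner y y = complex_of_real Y" by (simp add: Y_def cinner_self_norm)
  have cxx: "cinner x x = complex_of_real ((norm x)^2)" by (simp add: cinner_self_norm)
  have cc: "c * cnj c = complex_of_real ((cmod c)^2)" by (rule complex_norm_square[symmetric])
  have "cinner w w = complex_of_real Y * (complex_of_real Y * cinner x x - c * cnj c)"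
    unfolding w_def
    by (simp add: cinner_diff_left cinner_diff_right cinner_scaleC_left cinner_scaleC_right cyx cyy
        c_def[symmetric])
  also have "\<dots> = complex_of_real (Y * (Y * (norm x)^2 - (cmod c)^2))"
    unfolding cxx cc by simp
  finally have "Re (cinner w w) = Y * (Y * (norm x)^2 - (cmod c)^2)" by simp
  hence "0 \<le> Y * (Y * (norm x)^2 - (cmod c)^2)" using cinner_Re_ge_zero[of w] by simp
  hence "(cmod c)^2 \<le> Y * (norm x)^2" using Yp by (simp add: zero_le_mult_iff)
  hence "(cmod c)^2 \<le> (norm x * norm y)^2" by (simp add: Y_def power_mult_distrib mult.commute)
  thus ?thesis unfolding c_def
    by (rule power2_le_imp_le) simp
qed

lemma Re_cinner_le: "Re (cinner x y) \<le> norm x * norm (y::'a::complex_inner)"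
  using cauchy_schwarz[of x y] complex_Re_le_cmod[of "cinner x y"] by linarith



lemma scaleC_sum_right: "c *\<^sub>C sum g B = (\<Sum>b\<in>B. c *\<^sub>C (g b :: 'a::complex_vector))"
  by (induction B rule: infinite_finite_induct) (simp_all add: scaleC_add_right)

lemma scaleC_one_simp[simp]: "1 *\<^sub>C x = (x::'a::complex_vector)"
  by (rule scaleC_one)

lemma clinear_add: "clinear f \<Longrightarrow> f (x + y) = f x + f y"
  by (simp add: clinear_def)
lemma clinear_scaleC: "clinear f \<Longrightarrow> f (c *\<^sub>C x) = c *\<^sub>C f x"
  by (simp add: clinear_def)
lemma clinear_zero: "clinear f \<Longrightarrow> f 0 = 0"
  using clinear_scaleC[of f 0 0] by simp
lemma clinear_diff: "clinear f \<Longrightarrow> f (x - y) = f x - f y"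
  using clinear_add[of f "x - y" y] by (simp add: eq_diff_eq)
lemma clinear_scaleR: "clinear f \<Longrightarrow> f (r *\<^sub>R x) = r *\<^sub>R f x"
  using clinear_scaleC[of f "complex_of_real r" x] by (simp add: scaleC_of_real)
lemma clinear_sum: "clinear f \<Longrightarrow> f (sum g B) = (\<Sum>b\<in>B. f (g b))"
  by (induction B rule: infinite_finite_induct) (simp_all add: clinear_zero clinear_add)

lemma sum_in_closed:
  assumes "0 \<in> T" "\<And>x y. x \<in> T \<Longrightarrow> y \<in> T \<Longrightarrow> x + y \<in> T"
    and "finite B" "\<And>b. b \<in> B \<Longrightarrow> g b \<in> T"
  shows "sum g B \<in> T"
  using assms(3,4) by (induction B rule: finite_induct) (simp_all add: assms(1,2))

lemma cspan_sub:
  assumes "0 \<in> T" "\<And>x y. x \<in> T \<Longrightarrow> y \<in> T \<Longrightarrow> x + y \<in> T"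
    "\<And>c x. x \<in> T \<Longrightarrow> c *\<^sub>C x \<in> T" "X \<subseteq> T"
  shows "cspan X \<subseteq> T"
proof
  fix x assume "x \<in> cspan X"
  then obtain B c where B: "finite B" "B \<subseteq> X" "x = (\<Sum>b\<in>B. c b *\<^sub>C b)"
    unfolding cspan_def by blast
  show "x \<in> T" unfolding B(3)
  proof (rule sum_in_closed)
    show "0 \<in> T" by (rule assms(1))
    show "\<And>x y. x \<in> T \<Longrightarrow> y \<in> T \<Longrightarrow> x + y \<in> T" by (rule assms(2))
    show "finite B" by (rule B(1))
    fix b assume "b \<in> B" thus "c b *\<^sub>C b \<in> T" using B(2) assms(3,4) by blast
  qed
qed

lemma cspan_zero: "0 \<in> cspan X"
  unfolding cspan_def by (rule CollectI, rule exI[of _ "{}"]) simp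

lemma cspan_superset: "X \<subseteq> cspan X"
proof
  fix x assume "x \<in> X"
  thus "x \<in> cspan X" unfolding cspan_def
    by (intro CollectI exI[of _ "{x}"] exI[of _ "\<lambda>_. 1"]) simp
qed

lemma cspan_scale: "x \<in> cspan X \<Longrightarrow> d *\<^sub>C x \<in> cspan X"
proof -
  assume "x \<in> cspan X"
  then obtain B c where B: "finite B" "B \<subseteq> X" "x = (\<Sum>b\<in>B. c b *\<^sub>C b)"
    unfolding cspan_def by blast
  have "d *\<^sub>C x = (\<Sum>b\<in>B. (d * c b) *\<^sub>C b)"
    unfolding B(3) scaleC_sum_right by (simp add: scaleC_scaleC)
  thus ?thesis using B(1,2) unfolding cspan_def
    by (intro CollectI exI[of _ B] exI[of _ "\<lambda>b. d * c b"]) simp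
qed

lemma cspan_add: "x \<in> cspan X \<Longrightarrow> y \<in> cspan X \<Longrightarrow> x + y \<in> cspan X"
proof -
  assume "x \<in> cspan X" "y \<in> cspan X"
  then obtain B1 c1 B2 c2 where B1: "finite B1" "B1 \<subseteq> X" "x = (\<Sum>b\<in>B1. c1 b *\<^sub>C b)"
    and B2: "finite B2" "B2 \<subseteq> X" "y = (\<Sum>b\<in>B2. c2 b *\<^sub>C b)"
    unfolding cspan_def by blast
  define c where "c b = (if b \<in> B1 then c1 b else 0) + (if b \<in> B2 then c2 b else 0)" for b
  have fin: "finite (B1 \<union> B2)" using B1 B2 by simp
  have e1: "(\<Sum>b\<in>B1 \<union> B2. (if b \<in> B1 then c1 b else 0) *\<^sub>C b) = x"
    unfolding B1(3) by (rule sum.mono_neutral_cong_right[OF fin]) auto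
  have e2: "(\<Sum>b\<in>B1 \<union> B2. (if b \<in> B2 then c2 b else 0) *\<^sub>C b) = y"
    unfolding B2(3) by (rule sum.mono_neutral_cong_right[OF fin]) auto
  have "x + y = (\<Sum>b\<in>B1 \<union> B2. c b *\<^sub>C b)"
    unfolding c_def scaleC_add_left sum.distrib e1 e2 ..
  thus ?thesis using fin B1(2) B2(2) unfolding cspan_def
    by (intro CollectI exI[of _ "B1 \<union> B2"] exI[of _ c]) simp
qed

lemma cspan_mono_sub: "X \<subseteq> cspan Y \<Longrightarrow> cspan X \<subseteq> cspan Y"
  by (rule cspan_sub) (auto simp: cspan_zero cspan_add cspan_scale)

lemma sum_scaleC_in_cspan:
  assumes "finite I" "\<And>k. k \<in> I \<Longrightarrow> e k \<in> X"
  shows "(\<Sum>k\<in>I. c k *\<^sub>C e k) \<in> cspan X"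
proof (rule sum_in_closed)
  show "0 \<in> cspan X" by (rule cspan_zero)
  show "\<And>x y. x \<in> cspan X \<Longrightarrow> y \<in> cspan X \<Longrightarrow> x + y \<in> cspan X" by (rule cspan_add)
  show "finite I" by (rule assms(1))
  fix k assume "k \<in> I" thus "c k *\<^sub>C e k \<in> cspan X"
    using assms(2) cspan_superset cspan_scale by blast
qed



lemma scaleC_minus_one: "complex_of_real (-1) *\<^sub>C x = - (x::'a::complex_vector)"
  using scaleC_of_real[of "-1" x] by simp
lemma scaleC_minus_one': "(-1) *\<^sub>C x = - (x::'a::complex_vector)"
  using scaleC_of_real[of "-1" x] by simp

locale sa_setting =
  fixes N :: "('k::complex_inner \<times> 'k) set"
  assumes Nadd: "(x,y) \<in> N \<Longrightarrow> (x',y') \<in> N \<Longrightarrow> (x + x', y + y') \<in> N"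
    and Nscale: "(x,y) \<in> N \<Longrightarrow> (c *\<^sub>C x, c *\<^sub>C y) \<in> N"
    and Nherm: "(x,y) \<in> N \<Longrightarrow> (x',y') \<in> N \<Longrightarrow> cinner y x' = cnj (cinner y' x)"
    and Nres: "\<And>\<mu>::real. \<mu> < 0 \<Longrightarrow>
       complex_of_real \<mu> \<in> op_resolvent_set (closure (graph_dom N)) (op_part N)"
begin

abbreviation "M \<equiv> closure (graph_dom N)"
abbreviation "A \<equiv> op_part N"

lemma A_iff: "(x,y) \<in> A \<longleftrightarrow> (x,y) \<in> N \<and> x \<in> M \<and> y \<in> M"
  unfolding op_part_def by auto

lemma D_add: "x \<in> graph_dom N \<Longrightarrow> y \<in> graph_dom N \<Longrightarrow> x + y \<in> graph_dom N"
proof -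
  assume "x \<in> graph_dom N" "y \<in> graph_dom N"
  then obtain x' y' where "(x,x') \<in> N" "(y,y') \<in> N" unfolding graph_dom_def by force
  hence "(x + y, x' + y') \<in> N" by (rule Nadd)
  thus ?thesis unfolding graph_dom_def by force
qed

lemma D_scale: "x \<in> graph_dom N \<Longrightarrow> c *\<^sub>C x \<in> graph_dom N"
proof -
  assume "x \<in> graph_dom N"
  then obtain x' where "(x,x') \<in> N" unfolding graph_dom_def by force
  hence "(c *\<^sub>C x, c *\<^sub>C x') \<in> N" by (rule Nscale)
  thus ?thesis unfolding graph_dom_def by force
qed

lemma M_add: "x \<in> M \<Longrightarrow> y \<in> M \<Longrightarrow> x + y \<in> M"
proof -
  assume "x \<in> M" "y \<in> M"
  then obtain f g where f: "\<forall>n. f n \<in> graph_dom N" "f \<longlonglongrightarrow> x"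
    and g: "\<forall>n. g n \<in> graph_dom N" "g \<longlonglongrightarrow> y"
    unfolding closure_sequential by blast
  have "\<forall>n. f n + g n \<in> graph_dom N" using f g D_add by blast
  moreover have "(\<lambda>n. f n + g n) \<longlonglongrightarrow> x + y" using f(2) g(2) by (rule tendsto_add)
  ultimately show ?thesis unfolding closure_sequential
    by (intro exI[where x="\<lambda>n. f n + g n"] conjI)
qed

lemma M_scale: "x \<in> M \<Longrightarrow> c *\<^sub>C x \<in> M"
proof -
  assume "x \<in> M"
  then obtain f where f: "\<forall>n. f n \<in> graph_dom N" "f \<longlonglongrightarrow> x"
    unfolding closure_sequential by blast
  have "(\<lambda>n. norm (f n - x)) \<longlonglongrightarrow> 0"
    using f(2) by (rule tendsto_norm_zero[OF LIM_zero])
  hence "(\<lambda>n. cmod c * norm (f n - x)) \<longlonglongrightarrow> 0"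
    by (rule tendsto_mult_right_zero)
  hence "(\<lambda>n. norm (c *\<^sub>C f n - c *\<^sub>C x)) \<longlonglongrightarrow> 0"
    by (simp add: scaleC_diff_right[symmetric] norm_scaleC)
  hence "(\<lambda>n. c *\<^sub>C f n) \<longlonglongrightarrow> c *\<^sub>C x"
    by (rule LIM_zero_cancel[OF tendsto_norm_zero_cancel])
  moreover have "\<forall>n. c *\<^sub>C f n \<in> graph_dom N" using f D_scale by blast
  ultimately show ?thesis unfolding closure_sequential
    by (intro exI[where x="\<lambda>n. c *\<^sub>C f n"] conjI)
qed

lemma M_scaleR: "x \<in> M \<Longrightarrow> r *\<^sub>R x \<in> M"
  using M_scale[of x "complex_of_real r"] by (simp add: scaleC_of_real)

lemma M_diff: "x \<in> M \<Longrightarrow> y \<in> M \<Longrightarrow> x - y \<in> M"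
  using M_add[of x "(-1) *\<^sub>R y"] M_scaleR[of y "-1"] by simp

lemma A_add: "(x,y) \<in> A \<Longrightarrow> (x',y') \<in> A \<Longrightarrow> (x + x', y + y') \<in> A"
  unfolding A_iff using Nadd M_add by blast

lemma A_scale: "(x,y) \<in> A \<Longrightarrow> (c *\<^sub>C x, c *\<^sub>C y) \<in> A"
  unfolding A_iff using Nscale M_scale by blast

lemma A_diff: "(x,y) \<in> A \<Longrightarrow> (x',y') \<in> A \<Longrightarrow> (x - x', y - y') \<in> A"
  using A_add[of x y "complex_of_real (-1) *\<^sub>C x'" "complex_of_real (-1) *\<^sub>C y'"]
    A_scale[of x' y' "complex_of_real (-1)"]
  by (simp add: scaleC_minus_one')

lemma res_bound: "\<mu> < 0 \<Longrightarrow> \<exists>C\<ge>0. \<forall>x y. (x,y) \<in> A \<longrightarrow> norm x \<le> C * norm (y - \<mu> *\<^sub>R x)"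
proof -
  assume "\<mu> < 0"
  from Nres[OF this] obtain C where C: "\<forall>(x,y)\<in>A. norm x \<le> C * norm (y - complex_of_real \<mu> *\<^sub>C x)"
    unfolding op_resolvent_set_def by blast
  show ?thesis
  proof (intro exI[of _ "max C 0"] conjI allI impI)
    fix x y assume "(x,y) \<in> A"
    hence "norm x \<le> C * norm (y - \<mu> *\<^sub>R x)" using C by (auto simp: scaleC_of_real)
    also have "\<dots> \<le> max C 0 * norm (y - \<mu> *\<^sub>R x)" by (simp add: mult_right_mono)
    finally show "norm x \<le> max C 0 * norm (y - \<mu> *\<^sub>R x)" .
  qed simp
qed

lemma res_surj: "z \<in> M \<Longrightarrow> \<exists>x y. (x,y) \<in> A \<and> y + x = z"
proof -
  assume z: "z \<in> M"
  have "-1 < (0::real)" by simp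
  from Nres[OF this] have "\<forall>f\<in>M. \<exists>x y. (x, y) \<in> A \<and> y - complex_of_real (-1) *\<^sub>C x = f"
    unfolding op_resolvent_set_def by blast
  with z obtain x y where "(x,y) \<in> A" "y - complex_of_real (-1) *\<^sub>C x = z" by blast
  hence "(x,y) \<in> A \<and> y + x = z" by (simp add: scaleC_minus_one')
  thus ?thesis by blast
qed

definition C0 where "C0 = (SOME C. C \<ge> 0 \<and> (\<forall>x y. (x,y) \<in> A \<longrightarrow> norm x \<le> C * norm (y - (-1) *\<^sub>R x)))"

lemma C0: "C0 \<ge> 0" "(x,y) \<in> A \<Longrightarrow> norm x \<le> C0 * norm (y + x)"
proof -
  have "\<exists>C\<ge>0. \<forall>x y. (x,y) \<in> A \<longrightarrow> norm x \<le> C * norm (y - (-1) *\<^sub>R x)"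
    by (rule res_bound) simp
  hence H: "C0 \<ge> 0 \<and> (\<forall>x y. (x,y) \<in> A \<longrightarrow> norm x \<le> C0 * norm (y - (-1) *\<^sub>R x))"
    unfolding C0_def by (rule someI_ex)
  thus "C0 \<ge> 0" by simp
  show "(x,y) \<in> A \<Longrightarrow> norm x \<le> C0 * norm (y + x)" using H by simp
qed

definition R where "R z = (SOME x. \<exists>y. (x,y) \<in> A \<and> y + x = z)"

lemma R_pair: "z \<in> M \<Longrightarrow> (R z, z - R z) \<in> A"
proof -
  assume "z \<in> M"
  hence "\<exists>x y. (x,y) \<in> A \<and> y + x = z" by (rule res_surj)
  hence "\<exists>y. (R z, y) \<in> A \<and> y + R z = z" unfolding R_def by (rule someI_ex)
  then obtain y where "(R z, y) \<in> A" "y + R z = z" by blast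
  moreover hence "y = z - R z" by (simp add: eq_diff_eq)
  ultimately show ?thesis by simp
qed

lemma R_M: "z \<in> M \<Longrightarrow> R z \<in> M"
  using R_pair A_iff by blast

lemma R_uniq: "(x,y) \<in> A \<Longrightarrow> R (y + x) = x"
proof -
  assume xy: "(x,y) \<in> A"
  define z where "z = y + x"
  have zM: "z \<in> M" using xy unfolding z_def A_iff by (blast intro: M_add)
  have "(x - R z, y - (z - R z)) \<in> A" using A_diff[OF xy R_pair[OF zM]] .
  hence "norm (x - R z) \<le> C0 * norm ((y - (z - R z)) + (x - R z))" by (rule C0(2))
  also have "(y - (z - R z)) + (x - R z) = 0" unfolding z_def by simp
  finally have "norm (x - R z) \<le> 0" by simp
  thus ?thesis unfolding z_def[symmetric] by simp
qed

lemma R_bound: "z \<in> M \<Longrightarrow> norm (R z) \<le> C0 * norm z"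
  using C0(2)[OF R_pair[of z]] by simp

lemma R_add: "z \<in> M \<Longrightarrow> w \<in> M \<Longrightarrow> R (z + w) = R z + R w"
proof -
  assume zw: "z \<in> M" "w \<in> M"
  have "(R z + R w, (z - R z) + (w - R w)) \<in> A" using A_add[OF R_pair R_pair] zw by blast
  hence "R ((z - R z) + (w - R w) + (R z + R w)) = R z + R w" by (rule R_uniq)
  thus ?thesis by (simp add: algebra_simps)
qed

lemma R_scaleC: "z \<in> M \<Longrightarrow> R (c *\<^sub>C z) = c *\<^sub>C R z"
proof -
  assume z: "z \<in> M"
  have "(c *\<^sub>C R z, c *\<^sub>C (z - R z)) \<in> A" using A_scale[OF R_pair[OF z]] .
  hence "R (c *\<^sub>C (z - R z) + c *\<^sub>C R z) = c *\<^sub>C R z" by (rule R_uniq)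
  thus ?thesis by (simp add: scaleC_add_right[symmetric])
qed

lemma R_scaleR: "z \<in> M \<Longrightarrow> R (r *\<^sub>R z) = r *\<^sub>R R z"
  using R_scaleC[of z "complex_of_real r"] by (simp add: scaleC_of_real)

lemma R_diff: "z \<in> M \<Longrightarrow> w \<in> M \<Longrightarrow> R (z - w) = R z - R w"
  using R_add[of z "(-1) *\<^sub>R w"] R_scaleR[of w "-1"] M_scaleR[of w "-1"] by simp

lemma R_sym: "z \<in> M \<Longrightarrow> w \<in> M \<Longrightarrow> cinner (R z) w = cinner z (R w)"
proof -
  assume zw: "z \<in> M" "w \<in> M"
  have h1: "cinner (z - R z) (R w) = cnj (cinner (w - R w) (R z))"
    using Nherm[of "R z" "z - R z" "R w" "w - R w"] R_pair zw A_iff by blast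
  have "cinner (R z) w = cinner (R z) (w - R w) + cinner (R z) (R w)"
    by (simp add: cinner_diff_right)
  also have "cinner (R z) (w - R w) = cnj (cinner (w - R w) (R z))"
    by (rule cinner_cnj_commute)
  also have "\<dots> = cinner (z - R z) (R w)" using h1 by simp
  also have "cinner (z - R z) (R w) + cinner (R z) (R w) = cinner z (R w)"
    by (simp add: cinner_diff_left)
  finally show ?thesis .
qed


end

context sa_setting begin

lemma M_zero: "z \<in> M \<Longrightarrow> 0 \<in> M"
  using M_scaleR[of z 0] by simp

lemma R_zero: "z \<in> M \<Longrightarrow> R 0 = 0"
  using R_scaleR[of z 0] by simp

definition h where "h z = Re (cinner (R z) z) - (norm (R z))^2"

lemma h_pair: "(x,y) \<in> A \<Longrightarrow> h (y + x) = Re (cinner y x)"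
proof -
  assume xy: "(x,y) \<in> A"
  have "R (y + x) = x" using xy by (rule R_uniq)
  hence "h (y + x) = Re (cinner x y) + Re (cinner x x) - (norm x)^2"
    unfolding h_def by (simp add: cinner_add_right)
  also have "\<dots> = Re (cinner y x)" by (simp add: norm_sq_cinner Re_cinner_swap[of y x])
  finally show ?thesis .
qed

lemma h_zero: "z \<in> M \<Longrightarrow> h 0 = 0"
  unfolding h_def using R_zero by simp

lemma h_lower: "z \<in> M \<Longrightarrow> - (C0 + C0^2) * (norm z)^2 \<le> h z"
proof -
  assume z: "z \<in> M"
  have b: "norm (R z) \<le> C0 * norm z" using R_bound[OF z] .
  have "- (norm (R z) * norm z) \<le> Re (cinner (R z) z)"
    using cauchy_schwarz[of "R z" z] abs_Re_le_cmod[of "cinner (R z) z"] by linarith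
  moreover have "norm (R z) * norm z \<le> C0 * (norm z)^2"
    using mult_right_mono[OF b norm_ge_zero[of z]] by (simp add: power2_eq_square mult.assoc)
  moreover have "(norm (R z))^2 \<le> (C0 * norm z)^2"
    using b by (simp add: power_mono)
  ultimately show ?thesis unfolding h_def by (simp add: power_mult_distrib algebra_simps)
qed

definition S where "S m z = R z - R (R z) - m *\<^sub>R z"

lemma S_M: "z \<in> M \<Longrightarrow> S m z \<in> M"
  unfolding S_def by (intro M_diff M_scaleR R_M)

lemma S_diff: "z \<in> M \<Longrightarrow> w \<in> M \<Longrightarrow> S m (z - w) = S m z - S m w"
proof -
  assume z: "z \<in> M" and w: "w \<in> M"
  have e1: "R (z - w) = R z - R w" by (rule R_diff[OF z w])
  have e2: "R (R z - R w) = R (R z) - R (R w)" by (rule R_diff[OF R_M[OF z] R_M[OF w]])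
  show ?thesis unfolding S_def e1 e2 by (simp add: scaleR_diff_right)
qed

lemma S_scaleR: "z \<in> M \<Longrightarrow> S m (t *\<^sub>R z) = t *\<^sub>R S m z"
proof -
  assume z: "z \<in> M"
  have e1: "R (t *\<^sub>R z) = t *\<^sub>R R z" by (rule R_scaleR[OF z])
  have e2: "R (t *\<^sub>R R z) = t *\<^sub>R R (R z)" by (rule R_scaleR[OF R_M[OF z]])
  show ?thesis unfolding S_def e1 e2 by (simp add: scaleR_diff_right)
qed

lemma S_sym: "z \<in> M \<Longrightarrow> w \<in> M \<Longrightarrow> cinner (S m z) w = cinner z (S m w)"
proof -
  assume zw: "z \<in> M" "w \<in> M"
  have 1: "cinner (R z) w = cinner z (R w)" using R_sym zw .
  have 2: "cinner (R (R z)) w = cinner z (R (R w))"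
    using R_sym[OF R_M[OF zw(1)] zw(2)] R_sym[OF zw(1) R_M[OF zw(2)]] by simp
  show ?thesis unfolding S_def
    by (simp add: cinner_diff_left cinner_diff_right cinner_scaleR_left cinner_scaleR_right 1 2)
qed

lemma S_Re: "z \<in> M \<Longrightarrow> Re (cinner (S m z) z) = h z - m * (norm z)^2"
proof -
  assume z: "z \<in> M"
  have "cinner (R (R z)) z = cinner (R z) (R z)" using R_sym[OF R_M[OF z] z] .
  thus ?thesis unfolding S_def h_def
    by (simp add: cinner_diff_left cinner_scaleR_left norm_sq_cinner)
qed

definition K where "K m = C0 + C0 * C0 + \<bar>m\<bar> + 1"

lemma K_pos: "K m > 0"
  unfolding K_def using C0(1) by (simp add: add_nonneg_pos)

lemma S_bound: "z \<in> M \<Longrightarrow> norm (S m z) \<le> (K m - 1) * norm z"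
proof -
  assume z: "z \<in> M"
  have t1: "norm (R z - R (R z) - m *\<^sub>R z) \<le> norm (R z - R (R z)) + norm (m *\<^sub>R z)"
    by (rule norm_triangle_ineq4)
  have t2: "norm (R z - R (R z)) \<le> norm (R z) + norm (R (R z))"
    by (rule norm_triangle_ineq4)
  have "norm (S m z) \<le> norm (R z) + norm (R (R z)) + norm (m *\<^sub>R z)"
    unfolding S_def using t1 t2 by linarith
  also have "norm (R (R z)) \<le> C0 * (C0 * norm z)"
  proof -
    have "norm (R (R z)) \<le> C0 * norm (R z)" by (rule R_bound[OF R_M[OF z]])
    also have "\<dots> \<le> C0 * (C0 * norm z)" by (rule mult_left_mono[OF R_bound[OF z] C0(1)])
    finally show ?thesis .
  qed
  hence "norm (R z) + norm (R (R z)) + norm (m *\<^sub>R z) \<le> C0 * norm z + C0 * (C0 * norm z) + \<bar>m\<bar> * norm z"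
    using R_bound[OF z] by simp
  also have "\<dots> = (K m - 1) * norm z" unfolding K_def by (simp add: algebra_simps)
  finally show ?thesis .
qed

lemma S_key:
  assumes hm: "\<forall>z\<in>M. m * (norm z)^2 \<le> h z" and z: "z \<in> M"
  shows "(norm (S m z))^2 \<le> K m * (h z - m * (norm z)^2)"
proof -
  define w where "w = S m z"
  define t where "t = 1 / K m"
  have Kp: "K m > 0" by (rule K_pos)
  have wM: "w \<in> M" unfolding w_def using S_M[OF z] .
  define v where "v = z - t *\<^sub>R w"
  have vM: "v \<in> M" unfolding v_def using z wM by (intro M_diff M_scaleR)
  have Sv: "S m v = w - t *\<^sub>R S m w"
    unfolding v_def using S_diff[OF z M_scaleR[OF wM]] S_scaleR[OF wM] w_def by simp
  have sw: "cinner (S m w) z = cinner w w"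
    using S_sym[OF wM z] w_def by simp
  have "0 \<le> h v - m * (norm v)^2" using hm vM by simp
  also have "\<dots> = Re (cinner (S m v) v)" using S_Re[OF vM] by simp
  also have "cinner (S m v) v = cinner (w - t *\<^sub>R S m w) (z - t *\<^sub>R w)"
    by (subst Sv, simp add: v_def)
  also have "Re (cinner (w - t *\<^sub>R S m w) (z - t *\<^sub>R w))
      = Re (cinner w z) - 2 * t * (norm w)^2 + t^2 * Re (cinner (S m w) w)"
    by (simp add: cinner_diff_left cinner_diff_right cinner_scaleR_left cinner_scaleR_right sw
        norm_sq_cinner[unfolded power2_eq_square] power2_eq_square algebra_simps)
  also have "Re (cinner (S m w) w) \<le> K m * (norm w)^2"
  proof -
    have "Re (cinner (S m w) w) \<le> norm (S m w) * norm w" by (rule Re_cinner_le)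
    also have "\<dots> \<le> ((K m - 1) * norm w) * norm w"
      using S_bound[OF wM] by (simp add: mult_right_mono)
    also have "\<dots> \<le> K m * (norm w)^2"
      using mult_nonneg_nonneg[of "norm w" "norm w"] by (simp add: power2_eq_square algebra_simps)
    finally show ?thesis .
  qed
  hence "Re (cinner w z) - 2 * t * (norm w)^2 + t^2 * Re (cinner (S m w) w)
      \<le> Re (cinner w z) - 2 * t * (norm w)^2 + t^2 * (K m * (norm w)^2)"
    by (simp add: mult_left_mono)
  also have "\<dots> = Re (cinner w z) - (norm w)^2 / K m"
    unfolding t_def using Kp by (simp add: field_simps power2_eq_square)
  finally have "(norm w)^2 \<le> K m * Re (cinner w z)"
    using Kp by (simp add: field_simps)
  thus ?thesis unfolding w_def using S_Re[OF z] by simp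
qed

lemma gamma: assumes "t \<noteq> 0" "1 / t - 1 < 0"
  shows "\<exists>\<gamma>>0. \<forall>z\<in>M. \<gamma> * norm z \<le> norm (R z - t *\<^sub>R z)"
proof -
  obtain C where C: "C \<ge> 0" "\<And>x y. (x,y) \<in> A \<Longrightarrow> norm x \<le> C * norm (y - (1 / t - 1) *\<^sub>R x)"
    using res_bound[OF assms(2)] by blast
  have tp: "\<bar>t\<bar> > 0" using assms(1) by simp
  define \<gamma> where "\<gamma> = \<bar>t\<bar> / (C / \<bar>t\<bar> + 1)"
  have gp: "\<gamma> > 0" unfolding \<gamma>_def using tp C(1) by (simp add: add_nonneg_pos)
  show ?thesis
  proof (intro exI[of _ \<gamma>] conjI ballI gp)
    fix z assume z: "z \<in> M"
    define d where "d = norm (R z - t *\<^sub>R z)"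
    have "(z - R z) - (1 / t - 1) *\<^sub>R R z = - ((1 / t) *\<^sub>R (R z - t *\<^sub>R z))"
      using assms(1) by (simp add: algebra_simps scaleR_diff_right)
    hence "norm ((z - R z) - (1 / t - 1) *\<^sub>R R z) = d / \<bar>t\<bar>"
      unfolding d_def by simp
    hence b1: "norm (R z) \<le> C * (d / \<bar>t\<bar>)" using C(2)[OF R_pair[OF z]] by simp
    have "\<bar>t\<bar> * norm z = norm (R z - (R z - t *\<^sub>R z))" by simp
    also have "\<dots> \<le> norm (R z) + d" unfolding d_def by (rule norm_triangle_ineq4)
    also have "\<dots> \<le> (C / \<bar>t\<bar> + 1) * d" using b1 by (simp add: algebra_simps)
    finally have "\<bar>t\<bar> * norm z \<le> (C / \<bar>t\<bar> + 1) * d" .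
    hence "\<bar>t\<bar> * norm z / (C / \<bar>t\<bar> + 1) \<le> d"
      using tp C(1) by (simp add: pos_divide_le_eq add_nonneg_pos mult.commute)
    thus "\<gamma> * norm z \<le> d" unfolding \<gamma>_def by (simp add: field_simps)
  qed
qed

lemma h_nonneg: "z \<in> M \<Longrightarrow> 0 \<le> h z"
proof (rule ccontr)
  assume z0: "z \<in> M" "\<not> 0 \<le> h z"
  define Q where "Q = (\<lambda>z. h z / (norm z)^2) ` (M - {0})"
  have z00: "z \<noteq> 0" using z0 h_zero[OF z0(1)] by auto
  have Qne: "Q \<noteq> {}" unfolding Q_def using z0 z00 by blast
  have Qbdd: "bdd_below Q"
  proof (rule bdd_belowI)
    fix q assume "q \<in> Q"
    then obtain y where y: "y \<in> M" "y \<noteq> 0" "q = h y / (norm y)^2" unfolding Q_def by blast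
    have "- (C0 + C0^2) * (norm y)^2 \<le> h y" by (rule h_lower[OF y(1)])
    thus "- (C0 + C0^2) \<le> q" using y by (simp add: pos_le_divide_eq)
  qed
  define m where "m = Inf Q"
  have mle: "m \<le> h y / (norm y)^2" if "y \<in> M" "y \<noteq> 0" for y
    unfolding m_def Q_def by (rule cInf_lower) (use that Qbdd in \<open>auto simp: Q_def\<close>)
  have mneg: "m < 0"
    using mle[OF z0(1) z00] z0(2) z00 by (smt (verit) divide_neg_pos zero_less_norm_iff zero_less_power)
  have hm: "\<forall>y\<in>M. m * (norm y)^2 \<le> h y"
  proof
    fix y assume y: "y \<in> M"
    show "m * (norm y)^2 \<le> h y"
    proof (cases "y = 0")
      case True thus ?thesis using h_zero[OF y] by simp
    next
      case False thus ?thesis using mle[OF y False] by (simp add: pos_le_divide_eq)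
    qed
  qed
  define s where "s = sqrt (1 - 4 * m)"
  have s1: "s > 1" unfolding s_def using mneg by (simp add: real_less_rsqrt)
  have ss: "s^2 = 1 - 4 * m" unfolding s_def using mneg by simp
  define t1 where "t1 = (1 + s) / 2"
  define t2 where "t2 = (1 - s) / 2"
  have t1g: "t1 > 1" unfolding t1_def using s1 by simp
  have t2l: "t2 < 0" unfolding t2_def using s1 by simp
  have tsum: "t1 = 1 - t2" unfolding t1_def t2_def by (simp add: field_simps)
  have tprod: "m = (1 - t2) * t2" unfolding t2_def using ss by (simp add: field_simps power2_eq_square)
  obtain g1 where g1: "g1 > 0" "\<And>z. z \<in> M \<Longrightarrow> g1 * norm z \<le> norm (R z - t1 *\<^sub>R z)"
    using gamma[of t1] t1g by auto
  obtain g2 where g2: "g2 > 0" "\<And>z. z \<in> M \<Longrightarrow> g2 * norm z \<le> norm (R z - t2 *\<^sub>R z)"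
    using gamma[of t2] t2l by (auto simp: divide_neg_pos)
  have Slow: "g1 * g2 * norm z \<le> norm (S m z)" if z: "z \<in> M" for z
  proof -
    define w where "w = R z - t2 *\<^sub>R z"
    have wM: "w \<in> M" unfolding w_def using z by (intro M_diff M_scaleR R_M)
    have "R w - t1 *\<^sub>R w = - S m z"
      unfolding w_def S_def tsum tprod using R_diff[OF R_M[OF z] M_scaleR[OF z]] R_scaleR[OF z]
      by (simp add: algebra_simps scaleR_diff_right)
    hence "norm (S m z) = norm (R w - t1 *\<^sub>R w)" by simp
    moreover have "g1 * norm w \<le> norm (R w - t1 *\<^sub>R w)" by (rule g1(2)[OF wM])
    moreover have "g2 * norm z \<le> norm w" unfolding w_def by (rule g2(2)[OF z])
    ultimately show ?thesis using g1(1)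
      by (smt (verit, best) mult.assoc mult_left_mono)
  qed
  define \<eta> where "\<eta> = (g1 * g2)^2 / (2 * K m)"
  have Kp: "K m > 0" by (rule K_pos)
  have etap: "\<eta> > 0" unfolding \<eta>_def using g1 g2 Kp by simp
  have "Inf Q < m + \<eta>" using etap unfolding m_def by simp
  then obtain q where "q \<in> Q" "q < m + \<eta>" using cInf_less_iff[OF Qne Qbdd] by blast
  then obtain y where y: "y \<in> M" "y \<noteq> 0" "h y / (norm y)^2 < m + \<eta>" unfolding Q_def by blast
  have np: "(norm y)^2 > 0" using y(2) by simp
  have hy: "h y - m * (norm y)^2 < \<eta> * (norm y)^2"
    using y(3) np by (simp add: divide_less_eq algebra_simps)
  have "(g1 * g2 * norm y)^2 \<le> (norm (S m y))^2"
    using Slow[OF y(1)] g1(1) g2(1) by (simp add: power_mono)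
  also have "\<dots> \<le> K m * (h y - m * (norm y)^2)" by (rule S_key[OF hm y(1)])
  also have "\<dots> < K m * (\<eta> * (norm y)^2)" using hy Kp by simp
  also have "\<dots> = (g1 * g2 * norm y)^2 / 2"
    unfolding \<eta>_def using Kp by (simp add: field_simps power_mult_distrib)
  finally have "(g1 * g2 * norm y)^2 < (g1 * g2 * norm y)^2 / 2" .
  moreover have "(g1 * g2 * norm y)^2 > 0" using g1(1) g2(1) y(2) by simp
  ultimately show False by simp
qed

lemma iso_kernel:
  assumes xy: "(x,y) \<in> A" and iso: "cinner y x = 0"
  shows "(x, 0) \<in> N"
proof -
  define z where "z = y + x"
  have zM: "z \<in> M" using xy unfolding z_def A_iff by (blast intro: M_add)
  have Rz: "R z = x" unfolding z_def using xy by (rule R_uniq)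
  have hz: "h z = 0" unfolding z_def using h_pair[OF xy] iso by simp
  have hm: "\<forall>z\<in>M. 0 * (norm z)^2 \<le> h z" using h_nonneg by simp
  have "(norm (S 0 z))^2 \<le> K 0 * (h z - 0 * (norm z)^2)" by (rule S_key[OF hm zM])
  hence "S 0 z = 0" using hz by simp
  hence "R x = x" unfolding S_def Rz by simp
  moreover have xM: "x \<in> M" using xy A_iff by blast
  ultimately have "(x, 0) \<in> A" using R_pair[OF xM] by simp
  thus ?thesis using A_iff by blast
qed

end

lemma cinner_sum_left: "cinner (sum f B) y = (\<Sum>b\<in>B. cinner (f b) (y::'a::complex_inner))"
  by (induction B rule: infinite_finite_induct) (simp_all add: cinner_add_left)

lemma sesq_add_left: "sesquilinear a \<Longrightarrow> a (u + w) v = a u v + a w v"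
  by (simp add: sesquilinear_def)
lemma sesq_scale_left: "sesquilinear a \<Longrightarrow> a (c *\<^sub>C u) v = c * a u v"
  by (simp add: sesquilinear_def)

lemma norm_diff_orthonormal:
  assumes "cinner x x = 1" "cinner y y = 1" "cinner x y = 0"
  shows "norm (x - y) = sqrt 2"
proof -
  have yx: "cinner y x = 0" using assms(3) cinner_cnj_commute[of y x] by simp
  have "(norm (x - y))^2 = 2"
    unfolding norm_sq_cinner using assms yx by (simp add: cinner_diff_left cinner_diff_right)
  thus ?thesis by (metis norm_ge_zero real_sqrt_unique)
qed

lemma eigen_fin:
  fixes i :: "'v::complex_inner \<Rightarrow> 'h::complex_inner" and a :: "'v \<Rightarrow> 'v \<Rightarrow> complex" and lam :: real
  assumes i_inj: "inj i" and ic: "compact_op i" and a_sesq: "sesquilinear a"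
    and a_ell: "elliptic_form a i" and lam_pos: "lam > 0"
  shows "\<exists>B. finite B \<and> {u. \<forall>v. a u v - complex_of_real lam * cinner (i u) (i v) = 0} \<subseteq> cspan B"
proof (rule ccontr)
  define E where "E = {u. \<forall>v. a u v - complex_of_real lam * cinner (i u) (i v) = 0}"
  assume H0: "\<not> (\<exists>B. finite B \<and> {u. \<forall>v. a u v - complex_of_real lam * cinner (i u) (i v) = 0} \<subseteq> cspan B)"
  hence H: "\<And>B. finite B \<Longrightarrow> \<not> E \<subseteq> cspan B" unfolding E_def by blast
  have il: "clinear i" using ic unfolding compact_op_def by blast
  have a0: "a 0 v = 0" for v using sesq_scale_left[OF a_sesq, of 0 0 v] by simp
  have E0: "0 \<in> E" unfolding E_def using a0 clinear_zero[OF il] by simp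
  have Eadd: "u + w \<in> E" if "u \<in> E" "w \<in> E" for u w
  proof -
    have "a (u + w) v - complex_of_real lam * cinner (i (u + w)) (i v)
        = (a u v - complex_of_real lam * cinner (i u) (i v)) + (a w v - complex_of_real lam * cinner (i w) (i v))" for v
      by (simp add: sesq_add_left[OF a_sesq] clinear_add[OF il] cinner_add_left algebra_simps)
    thus ?thesis using that unfolding E_def by simp
  qed
  have Escale: "c *\<^sub>C u \<in> E" if "u \<in> E" for u c
  proof -
    have "a (c *\<^sub>C u) v - complex_of_real lam * cinner (i (c *\<^sub>C u)) (i v)
        = c * (a u v - complex_of_real lam * cinner (i u) (i v))" for v
      by (simp add: sesq_scale_left[OF a_sesq] clinear_scaleC[OF il] cinner_scaleC_left algebra_simps)
    thus ?thesis using that unfolding E_def by simp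
  qed
  have Ediff: "u - w \<in> E" if "u \<in> E" "w \<in> E" for u w
    using Eadd[OF that(1) Escale[OF that(2), of "-1"]] by (simp add: scaleC_minus_one')
  have EscaleR: "r *\<^sub>R u \<in> E" if "u \<in> E" for u r
    using Escale[OF that, of "complex_of_real r"] by (simp add: scaleC_of_real)
  obtain \<omega> \<delta> where od: "\<omega> > 0" "\<delta> > 0" "\<And>u. Re (a u u) + \<omega> * (norm (i u))^2 \<ge> \<delta> * (norm u)^2"
    using a_ell unfolding elliptic_form_def by blast
  have Ebound: "\<delta> * (norm u)^2 \<le> (lam + \<omega>) * (norm (i u))^2" if "u \<in> E" for u
  proof -
    have "a u u = complex_of_real lam * cinner (i u) (i u)" using that unfolding E_def by simp
    hence "Re (a u u) = lam * (norm (i u))^2" by (simp add: cinner_self_norm)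
    thus ?thesis using od(3)[of u] by (simp add: algebra_simps)
  qed
  have ortho: "\<exists>e. (\<forall>k<n. e k \<in> E) \<and> (\<forall>k<n. \<forall>l<n. cinner (i (e k)) (i (e l)) = (if k = l then 1 else 0))" for n :: nat
  proof (induction n)
    case 0 show ?case by simp
  next
    case (Suc n)
    then obtain e where e: "\<forall>k<n. e k \<in> E" "\<forall>k<n. \<forall>l<n. cinner (i (e k)) (i (e l)) = (if k = l then 1 else 0)"
      by blast
    have "\<not> E \<subseteq> cspan (e ` {..<n})" by (rule H) simp
    then obtain u where u: "u \<in> E" "u \<notin> cspan (e ` {..<n})" by blast
    define p where "p = (\<Sum>k\<in>{..<n}. cinner (i u) (i (e k)) *\<^sub>C e k)"
    have pspan: "p \<in> cspan (e ` {..<n})" unfolding p_def by (rule sum_scaleC_in_cspan) auto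
    have pE: "p \<in> E" unfolding p_def
    proof (rule sum_in_closed)
      show "0 \<in> E" by (rule E0)
      show "\<And>x y. x \<in> E \<Longrightarrow> y \<in> E \<Longrightarrow> x + y \<in> E" by (rule Eadd)
      show "finite {..<n}" by simp
      fix k assume "k \<in> {..<n}" thus "cinner (i u) (i (e k)) *\<^sub>C e k \<in> E" using e(1) Escale by blast
    qed
    define w where "w = u - p"
    have wE: "w \<in> E" unfolding w_def by (rule Ediff[OF u(1) pE])
    have wne: "w \<noteq> 0" using u(2) pspan unfolding w_def by auto
    have iwne: "i w \<noteq> 0"
    proof
      assume "i w = 0"
      hence "i w = i 0" using clinear_zero[OF il] by simp
      thus False using wne i_inj by (simp add: inj_eq)
    qed
    have iw: "i w = i u - (\<Sum>k\<in>{..<n}. cinner (i u) (i (e k)) *\<^sub>C i (e k))"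
      unfolding w_def p_def by (simp add: clinear_diff[OF il] clinear_sum[OF il] clinear_scaleC[OF il])
    have orth: "cinner (i w) (i (e l)) = 0" if l: "l < n" for l
    proof -
      have "cinner (\<Sum>k\<in>{..<n}. cinner (i u) (i (e k)) *\<^sub>C i (e k)) (i (e l))
          = (\<Sum>k\<in>{..<n}. cinner (i u) (i (e k)) * (if k = l then 1 else 0))"
        unfolding cinner_sum_left using e(2) l by (intro sum.cong) (auto simp: cinner_scaleC_left)
      also have "\<dots> = cinner (i u) (i (e l))" using l by (simp add: if_distrib sum.delta cong: if_cong)
      finally show ?thesis unfolding iw by (simp add: cinner_diff_left)
    qed
    have orth': "cinner (i (e l)) (i w) = 0" if "l < n" for l
      using orth[OF that] cinner_cnj_commute[of "i (e l)" "i w"] by simp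
    define r where "r = 1 / norm (i w)"
    have rp: "r > 0" unfolding r_def using iwne by simp
    define e' where "e' = e(n := r *\<^sub>R w)"
    have ie'n: "i (e' n) = r *\<^sub>R i w" unfolding e'_def by (simp add: clinear_scaleR[OF il])
    have nn: "cinner (i (e' n)) (i (e' n)) = 1"
      unfolding ie'n using iwne
      by (simp add: cinner_scaleR_left cinner_scaleR_right cinner_self_norm r_def power2_eq_square)
    show ?case
    proof (intro exI[of _ e'] conjI allI impI)
      fix k assume "k < Suc n"
      thus "e' k \<in> E" unfolding e'_def using e(1) EscaleR[OF wE] by (cases "k = n") auto
    next
      fix k l assume k: "k < Suc n" and l: "l < Suc n"
      show "cinner (i (e' k)) (i (e' l)) = (if k = l then 1 else 0)"
      proof (cases "k = n")
        case True
        show ?thesis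
        proof (cases "l = n")
          case True thus ?thesis using \<open>k = n\<close> nn by simp
        next
          case False
          hence "l < n" using l by simp
          thus ?thesis using \<open>k = n\<close> False ie'n orth
            by (simp add: e'_def cinner_scaleR_left)
        qed
      next
        case False
        hence kn: "k < n" using k by simp
        show ?thesis
        proof (cases "l = n")
          case True thus ?thesis using kn ie'n orth'
            by (simp add: e'_def cinner_scaleR_right)
        next
          case False
          hence "l < n" using l by simp
          thus ?thesis using kn e(2) \<open>k \<noteq> n\<close> False by (simp add: e'_def)
        qed
      qed
    qed
  qed
  define K0 where "K0 = sqrt ((lam + \<omega>) / \<delta>)"
  have K0p: "K0 > 0" unfolding K0_def using od lam_pos by simp
  have unitb: "norm u \<le> K0" if "u \<in> E" "norm (i u) = 1" for u
  proof -
    have "\<delta> * (norm u)^2 \<le> lam + \<omega>" using Ebound[OF that(1)] that(2) by simp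
    hence "(norm u)^2 \<le> (lam + \<omega>) / \<delta>" using od(2) by (simp add: field_simps)
    thus ?thesis unfolding K0_def by (simp add: real_le_rsqrt)
  qed
  define Sc where "Sc = closure (i ` {x. norm x \<le> 1})"
  have cSc: "compact Sc" using ic unfolding compact_op_def Sc_def by blast
  define \<rho> where "\<rho> = 1 / (2 * K0)"
  have rhop: "\<rho> > 0" unfolding \<rho>_def using K0p by simp
  have cover: "Sc \<subseteq> (\<Union>c\<in>Sc. ball c \<rho>)"
  proof
    fix x assume "x \<in> Sc"
    moreover have "x \<in> ball x \<rho>" using rhop by simp
    ultimately show "x \<in> (\<Union>c\<in>Sc. ball c \<rho>)" by blast
  qed
  obtain C' where C': "C' \<subseteq> Sc" "finite C'" "Sc \<subseteq> (\<Union>c\<in>C'. ball c \<rho>)"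
    by (rule compactE_image[OF cSc open_ball cover])
  define n where "n = Suc (card C')"
  obtain e where e: "\<forall>k<n. e k \<in> E" "\<forall>k<n. \<forall>l<n. cinner (i (e k)) (i (e l)) = (if k = l then 1 else 0)"
    using ortho[of n] by blast
  define p where "p k = (1 / K0) *\<^sub>R i (e k)" for k
  have ninorm: "norm (i (e k)) = 1" if "k < n" for k
  proof -
    have "(norm (i (e k)))^2 = 1" unfolding norm_sq_cinner using e(2) that by simp
    thus ?thesis using norm_ge_zero[of "i (e k)"] by (auto simp: power2_eq_1_iff)
  qed
  have sub: "i ` {x. norm x \<le> 1} \<subseteq> Sc" unfolding Sc_def by (rule closure_subset)
  have pin: "p k \<in> Sc" if "k < n" for k
  proof -
    have nb: "norm (e k) \<le> K0" using unitb[OF e(1)[rule_format, OF that] ninorm[OF that]] .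
    have "norm ((1 / K0) *\<^sub>R e k) = \<bar>1 / K0\<bar> * norm (e k)" by (rule norm_scaleR)
    also have "\<bar>1 / K0\<bar> = 1 / K0" using K0p by simp
    also have "1 / K0 * norm (e k) \<le> 1 / K0 * K0" by (rule mult_left_mono[OF nb]) (use K0p in simp)
    also have "1 / K0 * K0 = 1" using K0p by simp
    finally have nb1: "norm ((1 / K0) *\<^sub>R e k) \<le> 1" .
    have pk: "p k = i ((1 / K0) *\<^sub>R e k)" unfolding p_def by (rule clinear_scaleR[OF il, symmetric])
    have "p k \<in> i ` {x. norm x \<le> 1}" unfolding pk by (rule imageI) (simp only: mem_Collect_eq nb1)
    thus ?thesis by (rule subsetD[OF sub])
  qed
  have "\<exists>c. c \<in> C' \<and> dist c (p k) < \<rho>" if "k \<in> {..<n}" for k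
  proof -
    have "p k \<in> (\<Union>c\<in>C'. ball c \<rho>)" by (rule subsetD[OF C'(3) pin]) (use that in simp)
    then obtain c where "c \<in> C'" "p k \<in> ball c \<rho>" by (rule UN_E)
    thus ?thesis by (intro exI[of _ c]) (simp add: mem_ball)
  qed
  hence "\<forall>k\<in>{..<n}. \<exists>c. c \<in> C' \<and> dist c (p k) < \<rho>" by (rule ballI)
  from bchoice[OF this] obtain g where g0: "\<forall>k\<in>{..<n}. g k \<in> C' \<and> dist (g k) (p k) < \<rho>" by (elim exE)
  have g: "\<And>k. k < n \<Longrightarrow> g k \<in> C' \<and> dist (g k) (p k) < \<rho>" using g0 by simp
  have pdist: "dist (p k) (p l) = sqrt 2 / K0" if "k < n" "l < n" "k \<noteq> l" for k l
  proof -
    have "norm (i (e k) - i (e l)) = sqrt 2"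
      by (rule norm_diff_orthonormal) (use e(2) that in auto)
    moreover have "p k - p l = (1 / K0) *\<^sub>R (i (e k) - i (e l))" unfolding p_def by (simp add: scaleR_diff_right)
    ultimately show ?thesis using K0p by (simp add: dist_norm)
  qed
  have "inj_on g {..<n}"
  proof (rule inj_onI)
    fix k l assume k: "k \<in> {..<n}" and l: "l \<in> {..<n}" and gkl: "g k = g l"
    show "k = l"
    proof (rule ccontr)
      assume kl: "k \<noteq> l"
      have kn: "k < n" and ln: "l < n" using k l by simp_all
      have d1: "dist (p k) (g k) < \<rho>" using g[OF kn] by (simp add: dist_commute)
      have d2: "dist (g l) (p l) < \<rho>" using g[OF ln] by simp
      have "dist (p k) (p l) \<le> dist (p k) (g k) + dist (g k) (p l)" by (rule dist_triangle)
      also have "\<dots> = dist (p k) (g k) + dist (g l) (p l)" using gkl by simp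
      also have "\<dots> < \<rho> + \<rho>" by (rule add_strict_mono[OF d1 d2])
      also have "\<dots> = 1 / K0" unfolding \<rho>_def using K0p by (simp add: field_simps)
      finally have "dist (p k) (p l) < 1 / K0" .
      hence "sqrt 2 / K0 < 1 / K0" using pdist[OF kn ln kl] by simp
      hence "sqrt 2 < 1" using K0p by (simp add: divide_strict_right_mono_neg divide_less_cancel)
      thus False by simp
    qed
  qed
  hence "card {..<n} \<le> card C'" by (rule card_inj_on_le) (use g C'(2) in auto)
  thus False unfolding n_def by simp
qed

lemma Ng_iff: "(x,y) \<in> Ngraph a i j lam \<longleftrightarrow>
  (\<exists>u. x = j u \<and> (\<forall>v. a u v - complex_of_real lam * cinner (i u) (i v) = cinner y (j v)))"
  unfolding Ngraph_def by auto

theorem lemma2p7: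
  fixes i :: "'v::chilbert_space \<Rightarrow> 'h::chilbert_space"
    and j :: "'v \<Rightarrow> 'k::chilbert_space"
    and a :: "'v \<Rightarrow> 'v \<Rightarrow> complex"
    and lam :: real
  assumes i_inj: "inj i"
    and i_compact: "compact_op i"
    and j_compact: "compact_op j"
    and a_sesq: "sesquilinear a"
    and a_sym: "symmetric_form a"
    and a_pos: "positive_form a"
    and a_bdd: "bounded_form a"
    and a_ell: "elliptic_form a i"
    and lam_pos: "lam > 0"
    and inf_dim: "infinite_cdim {\<phi>. \<exists>\<psi>. (\<phi>, \<psi>) \<in> op_part (Ngraph a i j lam) \<and> cinner \<psi> \<phi> = 0}"
  shows "graph_spectrum (Ngraph a i j lam) \<inter> complex_of_real ` {..<0} \<noteq> {}"
proof (rule ccontr)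
  define N where "N = Ngraph a i j lam"
  assume neg: "\<not> graph_spectrum (Ngraph a i j lam) \<inter> complex_of_real ` {..<0} \<noteq> {}"
  have il: "clinear i" using i_compact unfolding compact_op_def by blast
  have jl: "clinear j" using j_compact unfolding compact_op_def by blast
  have res: "complex_of_real \<mu> \<in> op_resolvent_set (closure (graph_dom N)) (op_part N)"
    if "\<mu> < 0" for \<mu> :: real
  proof -
    have "complex_of_real \<mu> \<in> complex_of_real ` {..<0}" using that by simp
    hence "complex_of_real \<mu> \<notin> graph_spectrum N" using neg unfolding N_def by blast
    thus ?thesis unfolding graph_spectrum_def op_spectrum_def by blast
  qed
  interpret S: sa_setting N
  proof
    fix x y x' y' assume xy: "(x,y) \<in> N" and xy': "(x',y') \<in> N"
    obtain u where u: "x = j u" "\<And>v. a u v - complex_of_real lam * cinner (i u) (i v) = cinner y (j v)"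
      using xy unfolding N_def Ng_iff by blast
    obtain u' where u': "x' = j u'" "\<And>v. a u' v - complex_of_real lam * cinner (i u') (i v) = cinner y' (j v)"
      using xy' unfolding N_def Ng_iff by blast
    have "a (u + u') v - complex_of_real lam * cinner (i (u + u')) (i v) = cinner (y + y') (j v)" for v
    proof -
      have "a (u + u') v - complex_of_real lam * cinner (i (u + u')) (i v)
          = (a u v - complex_of_real lam * cinner (i u) (i v)) + (a u' v - complex_of_real lam * cinner (i u') (i v))"
        by (simp add: sesq_add_left[OF a_sesq] clinear_add[OF il] cinner_add_left algebra_simps)
      also have "\<dots> = cinner (y + y') (j v)" by (simp add: u(2) u'(2) cinner_add_left)
      finally show ?thesis .
    qed
    moreover have "x + x' = j (u + u')" using u(1) u'(1) clinear_add[OF jl] by simp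
    ultimately show "(x + x', y + y') \<in> N" unfolding N_def Ng_iff by blast
  next
    fix x y c assume xy: "(x,y) \<in> N"
    obtain u where u: "x = j u" "\<And>v. a u v - complex_of_real lam * cinner (i u) (i v) = cinner y (j v)"
      using xy unfolding N_def Ng_iff by blast
    have "a (c *\<^sub>C u) v - complex_of_real lam * cinner (i (c *\<^sub>C u)) (i v) = cinner (c *\<^sub>C y) (j v)" for v
    proof -
      have "a (c *\<^sub>C u) v - complex_of_real lam * cinner (i (c *\<^sub>C u)) (i v)
          = c * (a u v - complex_of_real lam * cinner (i u) (i v))"
        by (simp add: sesq_scale_left[OF a_sesq] clinear_scaleC[OF il] cinner_scaleC_left algebra_simps)
      also have "\<dots> = cinner (c *\<^sub>C y) (j v)" by (simp add: u(2) cinner_scaleC_left)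
      finally show ?thesis .
    qed
    moreover have "c *\<^sub>C x = j (c *\<^sub>C u)" using u(1) clinear_scaleC[OF jl] by simp
    ultimately show "(c *\<^sub>C x, c *\<^sub>C y) \<in> N" unfolding N_def Ng_iff by blast
  next
    fix x y x' y' assume xy: "(x,y) \<in> N" and xy': "(x',y') \<in> N"
    obtain u where u: "x = j u" "\<And>v. a u v - complex_of_real lam * cinner (i u) (i v) = cinner y (j v)"
      using xy unfolding N_def Ng_iff by blast
    obtain u' where u': "x' = j u'" "\<And>v. a u' v - complex_of_real lam * cinner (i u') (i v) = cinner y' (j v)"
      using xy' unfolding N_def Ng_iff by blast
    have "cinner y x' = a u u' - complex_of_real lam * cinner (i u) (i u')" using u(2)[of u'] u'(1) by simp
    also have "\<dots> = cnj (a u' u - complex_of_real lam * cinner (i u') (i u))"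
    proof -
      have s1: "a u u' = cnj (a u' u)" using a_sym unfolding symmetric_form_def by blast
      have s2: "cinner (i u) (i u') = cnj (cinner (i u') (i u))" by (rule cinner_cnj_commute)
      show ?thesis unfolding s1 s2 by simp
    qed
    also have "\<dots> = cnj (cinner y' x)" using u'(2)[of u] u(1) by simp
    finally show "cinner y x' = cnj (cinner y' x)" .
  next
    fix \<mu> :: real assume "\<mu> < 0"
    thus "complex_of_real \<mu> \<in> op_resolvent_set (closure (graph_dom N)) (op_part N)" by (rule res)
  qed
  define E where "E = {u. \<forall>v. a u v - complex_of_real lam * cinner (i u) (i v) = 0}"
  obtain B where B: "finite B" "E \<subseteq> cspan B"
    using eigen_fin[OF i_inj i_compact a_sesq a_ell lam_pos] unfolding E_def by blast
  define Sset where "Sset = {\<phi>. \<exists>\<psi>. (\<phi>, \<psi>) \<in> op_part N \<and> cinner \<psi> \<phi> = 0}"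
  have jspan: "j u \<in> cspan (j ` B)" if "u \<in> E" for u
  proof -
    have "u \<in> cspan B" using that B(2) by blast
    then obtain B' c where B': "finite B'" "B' \<subseteq> B" "u = (\<Sum>b\<in>B'. c b *\<^sub>C b)"
      unfolding cspan_def by blast
    have "j u = (\<Sum>b\<in>B'. c b *\<^sub>C j b)"
      unfolding B'(3) by (simp add: clinear_sum[OF jl] clinear_scaleC[OF jl])
    also have "\<dots> \<in> cspan (j ` B)"
      by (rule sum_scaleC_in_cspan[OF B'(1)]) (use B'(2) in blast)
    finally show ?thesis .
  qed
  have Ssub: "Sset \<subseteq> cspan (j ` B)"
  proof
    fix \<phi> assume "\<phi> \<in> Sset"
    then obtain \<psi> where "(\<phi>, \<psi>) \<in> op_part N" "cinner \<psi> \<phi> = 0" unfolding Sset_def by blast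
    hence "(\<phi>, 0) \<in> N" by (rule S.iso_kernel)
    then obtain u where u: "\<phi> = j u" "\<And>v. a u v - complex_of_real lam * cinner (i u) (i v) = cinner 0 (j v)"
      unfolding N_def Ng_iff by blast
    have "u \<in> E" unfolding E_def using u(2) by simp
    thus "\<phi> \<in> cspan (j ` B)" using jspan u(1) by simp
  qed
  hence "cspan Sset \<subseteq> cspan (j ` B)" by (rule cspan_mono_sub)
  moreover have "finite (j ` B)" using B(1) by simp
  ultimately show False using inf_dim unfolding infinite_cdim_def Sset_def N_def by blast
qed

end
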